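(* In the off-shell Yang–Mills setting described below, define for each index collection $I$ the Wick polynomial $S^I\equiv d_QT^I-i\,\partial_\mu T^{I\mu}$. Then $$S^{\emptyset}=i\,f_{abc}\Big(u_a\,v_b^{\mu}\,K_c v_{c\mu}+\tfrac12\,u_a\,u_b\,K_c\tilde u_c\Big),\qquad S^{\mu}=\tfrac{i}{2}\,f_{abc}\,u_a\,u_b\,K_c v_c^{\mu},\qquad S^I=0\ \text{ for } |I|>1.$$
   Context: Fields $v_a^\mu$ (Bose), $u_a,\tilde u_a$ (Fermi), $a=1,\dots,r$, are generalized free fields: they are defined exactly as the free massless Yang–Mills fields (two-point functions $\langle\Omega,v_a^\mu(x_1)v_b^\nu(x_2)\Omega\rangle=i\delta_{ab}\eta^{\mu\nu}D^{(+)}(x_1-x_2)$, $\langle\Omega,u_a(x_1)\tilde u_b(x_2)\Omega\rangle=-i\delta_{ab}D^{(+)}(x_1-x_2)$, $\langle\Omega,\tilde u_a(x_1)u_b(x_2)\Omega\rangle=i\delta_{ab}D^{(+)}(x_1-x_2)$, all higher truncated functions zero), except that the Pauli–Jordan distribution is replaced by an off-shell distribution $D^{\rm off}=\int d\lambda\,\rho(\lambda)D_\lambda$ (with $\rho$ tending to a delta function in the physical limit), so the fields no longer satisfy the Klein–Gordon equation. The gauge charge is kept: $[Q,v_a^\mu]=i\partial^\mu u_a$, $\{Q,u_a\}=0$, $\{Q,\tilde u_a\}=-i\partial_\mu v_a^\mu$, $Q\Omega=0$, and $d_Q$ is the graded commutator with $Q$. $K_c\equiv\square+m_c^2$ is the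 Klein–Gordon operator for the mass $m_c$ of the $c$-th field (here $m_c=0$). With $F_a^{\mu\nu}=\partial^\mu v_a^\nu-\partial^\nu v_a^\mu$ and real completely antisymmetric constants $f_{abc}$, set $T^{\emptyset}=f_{abc}\big(\tfrac12 v_{a\mu}v_{b\nu}F_c^{\nu\mu}+u_a v_b^\mu\partial_\mu\tilde u_c\big)$, $T^{\mu}=f_{abc}\big(u_a v_{b\nu}F_c^{\nu\mu}-\tfrac12 u_a u_b\partial^\mu\tilde u_c\big)$, $T^{\mu\nu}=\tfrac12 f_{abc}u_a u_b F_c^{\mu\nu}$, $T^I=0$ for $|I|\ge3$ (Wick products of the off-shell fields; $T^{I\mu}$ denotes $T^I$ with the index $\mu$ appended). *)

theory Defs
  imports Complex_Main
begin

text \<open>Lorentz indices are naturals 0..3; derivative multi-indices are maps nat => nat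
  (alpha nu = number of derivatives with respect to x^nu).
  v a mu alpha stands for the Wick monomial (partial^alpha v_a^mu) (upper Lorentz index),
  u a alpha and ut a alpha for (partial^alpha u_a), (partial^alpha ut_a).
  D nu is the derivative with respect to x^nu (lower index), d is d_Q,
  p is the grading involution (parity automorphism), J is the imaginary unit i.\<close>

definition eta :: "nat \<Rightarrow> real" where
  "eta \<mu> = (if \<mu> = 0 then 1 else -1)"

definition shift :: "nat \<Rightarrow> (nat \<Rightarrow> nat) \<Rightarrow> (nat \<Rightarrow> nat)" where
  "shift \<nu> \<alpha> = \<alpha>(\<nu> := Suc (\<alpha> \<nu>))"

definition noder :: "nat \<Rightarrow> nat" where
  "noder = (\<lambda>_. 0)"

definition Fstr :: "(nat \<Rightarrow> 'A::real_algebra_1 \<Rightarrow> 'A) \<Rightarrow> ('g \<Rightarrow> nat \<Rightarrow> (nat \<Rightarrow> nat) \<Rightarrow> 'A)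
    \<Rightarrow> 'g \<Rightarrow> nat \<Rightarrow> nat \<Rightarrow> 'A" where
  "Fstr D v c \<nu> \<mu> = eta \<nu> *\<^sub>R D \<nu> (v c \<mu> noder) - eta \<mu> *\<^sub>R D \<mu> (v c \<nu> noder)"

text \<open>Klein-Gordon operator (m_c = 0): K = box = partial_nu partial^nu.\<close>
definition Kop :: "(nat \<Rightarrow> 'A::real_algebra_1 \<Rightarrow> 'A) \<Rightarrow> 'A \<Rightarrow> 'A" where
  "Kop D x = (\<Sum>\<nu><4. eta \<nu> *\<^sub>R D \<nu> (D \<nu> x))"

definition Tym :: "('g::finite \<Rightarrow> 'g \<Rightarrow> 'g \<Rightarrow> real) \<Rightarrow> (nat \<Rightarrow> 'A::real_algebra_1 \<Rightarrow> 'A)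
    \<Rightarrow> ('g \<Rightarrow> nat \<Rightarrow> (nat \<Rightarrow> nat) \<Rightarrow> 'A) \<Rightarrow> ('g \<Rightarrow> (nat \<Rightarrow> nat) \<Rightarrow> 'A) \<Rightarrow> ('g \<Rightarrow> (nat \<Rightarrow> nat) \<Rightarrow> 'A)
    \<Rightarrow> nat list \<Rightarrow> 'A" where
  "Tym f D v u ut I = (case I of
      [] \<Rightarrow> (\<Sum>a\<in>UNIV. \<Sum>b\<in>UNIV. \<Sum>c\<in>UNIV. f a b c *\<^sub>R
              ((1/2) *\<^sub>R (\<Sum>\<mu><4. \<Sum>\<nu><4. (eta \<mu> * eta \<nu>) *\<^sub>R
                    (v a \<mu> noder * v b \<nu> noder * Fstr D v c \<nu> \<mu>))
               + (\<Sum>\<mu><4. u a noder * v b \<mu> noder * D \<mu> (ut c noder))))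
    | [\<mu>] \<Rightarrow> (\<Sum>a\<in>UNIV. \<Sum>b\<in>UNIV. \<Sum>c\<in>UNIV. f a b c *\<^sub>R
              ((\<Sum>\<nu><4. eta \<nu> *\<^sub>R (u a noder * v b \<nu> noder * Fstr D v c \<nu> \<mu>))
               - (1/2) *\<^sub>R (u a noder * u b noder * (eta \<mu> *\<^sub>R D \<mu> (ut c noder)))))
    | [\<mu>, \<nu>] \<Rightarrow> (\<Sum>a\<in>UNIV. \<Sum>b\<in>UNIV. \<Sum>c\<in>UNIV. f a b c *\<^sub>R
              ((1/2) *\<^sub>R (u a noder * u b noder * Fstr D v c \<mu> \<nu>)))
    | _ \<Rightarrow> 0)"

definition Sym :: "('g::finite \<Rightarrow> 'g \<Rightarrow> 'g \<Rightarrow> real) \<Rightarrow> 'A::real_algebra_1 \<Rightarrow> (nat \<Rightarrow> 'A \<Rightarrow> 'A)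
    \<Rightarrow> ('A \<Rightarrow> 'A) \<Rightarrow> ('g \<Rightarrow> nat \<Rightarrow> (nat \<Rightarrow> nat) \<Rightarrow> 'A) \<Rightarrow> ('g \<Rightarrow> (nat \<Rightarrow> nat) \<Rightarrow> 'A)
    \<Rightarrow> ('g \<Rightarrow> (nat \<Rightarrow> nat) \<Rightarrow> 'A) \<Rightarrow> nat list \<Rightarrow> 'A" where
  "Sym f J D d v u ut I =
     d (Tym f D v u ut I) - J * (\<Sum>\<mu><4. D \<mu> (Tym f D v u ut (I @ [\<mu>])))"

end

theory Submission
  imports Defs
begin


lemma self_neg_zero: fixes x :: "'a::real_vector" assumes "x = - x" shows "x = 0"
proof -
  have "(2::real) *\<^sub>R x = x + x" by (simp add: scaleR_2)
  also have "\<dots> = 0" using assms by (metis add.right_inverse)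
  finally show ?thesis by simp
qed

lemma sum4: "(\<Sum>i<(4::nat). g i) = g 0 + g 1 + g 2 + (g 3 :: 'a::comm_monoid_add)"
  by (simp add: eval_nat_numeral)

lemma eta_simps: "eta 0 = 1" "eta 1 = -1" "eta 2 = -1" "eta 3 = -1"
  by (simp_all add: eta_def)

lemma shift_comm: "shift m (shift n a) = shift n (shift m a)"
  by (cases "m = n") (auto simp: shift_def fun_upd_twist)

locale ym =
  fixes f :: "'g::finite \<Rightarrow> 'g \<Rightarrow> 'g \<Rightarrow> real"
    and J :: "'A::real_algebra_1"
    and D :: "nat \<Rightarrow> 'A \<Rightarrow> 'A" and d p :: "'A \<Rightarrow> 'A"
    and v :: "'g \<Rightarrow> nat \<Rightarrow> (nat \<Rightarrow> nat) \<Rightarrow> 'A"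
    and u ut :: "'g \<Rightarrow> (nat \<Rightarrow> nat) \<Rightarrow> 'A"
  assumes f_anti12: "\<And>a b c. f b a c = - f a b c"
    and f_anti23: "\<And>a b c. f a c b = - f a b c"
    and J_sq: "J * J = - 1"
    and J_central: "\<And>x. J * x = x * J"
    and comm_even: "\<And>x y. x \<in> range (\<lambda>(a, \<mu>, \<alpha>). v a \<mu> \<alpha>) \<Longrightarrow>
        y \<in> range (\<lambda>(a, \<mu>, \<alpha>). v a \<mu> \<alpha>) \<union> range (\<lambda>(a, \<alpha>). u a \<alpha>) \<union> range (\<lambda>(a, \<alpha>). ut a \<alpha>) \<Longrightarrow>
        x * y = y * x"
    and anticomm_odd: "\<And>x y. x \<in> range (\<lambda>(a, \<alpha>). u a \<alpha>) \<union> range (\<lambda>(a, \<alpha>). ut a \<alpha>) \<Longrightarrow>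
        y \<in> range (\<lambda>(a, \<alpha>). u a \<alpha>) \<union> range (\<lambda>(a, \<alpha>). ut a \<alpha>) \<Longrightarrow>
        x * y = - (y * x)"
    and D_add: "\<And>\<nu> x y. D \<nu> (x + y) = D \<nu> x + D \<nu> y"
    and D_scale: "\<And>\<nu> r x. D \<nu> (r *\<^sub>R x) = r *\<^sub>R D \<nu> x"
    and D_mult: "\<And>\<nu> x y. D \<nu> (x * y) = D \<nu> x * y + x * D \<nu> y"
    and D_J: "\<And>\<nu>. D \<nu> J = 0"
    and D_v: "\<And>\<nu> a \<mu> \<alpha>. D \<nu> (v a \<mu> \<alpha>) = v a \<mu> (shift \<nu> \<alpha>)"
    and D_u: "\<And>\<nu> a \<alpha>. D \<nu> (u a \<alpha>) = u a (shift \<nu> \<alpha>)"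
    and D_ut: "\<And>\<nu> a \<alpha>. D \<nu> (ut a \<alpha>) = ut a (shift \<nu> \<alpha>)"
    and p_add: "\<And>x y. p (x + y) = p x + p y"
    and p_scale: "\<And>r x. p (r *\<^sub>R x) = r *\<^sub>R p x"
    and p_mult: "\<And>x y. p (x * y) = p x * p y"
    and p_one: "p 1 = 1"
    and p_J: "p J = J"
    and p_v: "\<And>a \<mu> \<alpha>. p (v a \<mu> \<alpha>) = v a \<mu> \<alpha>"
    and p_u: "\<And>a \<alpha>. p (u a \<alpha>) = - u a \<alpha>"
    and p_ut: "\<And>a \<alpha>. p (ut a \<alpha>) = - ut a \<alpha>"
    and d_add: "\<And>x y. d (x + y) = d x + d y"
    and d_scale: "\<And>r x. d (r *\<^sub>R x) = r *\<^sub>R d x"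
    and d_mult: "\<And>x y. d (x * y) = d x * y + p x * d y"
    and d_J: "d J = 0"
    and d_v: "\<And>a \<mu> \<alpha>. d (v a \<mu> \<alpha>) = J * (eta \<mu> *\<^sub>R u a (shift \<mu> \<alpha>))"
    and d_u: "\<And>a \<alpha>. d (u a \<alpha>) = 0"
    and d_ut: "\<And>a \<alpha>. d (ut a \<alpha>) = - (J * (\<Sum>\<mu><4. v a \<mu> (shift \<mu> \<alpha>)))"
begin

lemma D_zero: "D n 0 = 0" using D_scale[of n 0 0] by simp
lemma D_minus: "D n (- x) = - D n x" using D_scale[of n "-1" x] by simp
lemma D_diff: "D n (x - y) = D n x - D n y" using D_add[of n x "-y"] by (simp add: D_minus)
lemma D_sum: "D n (sum g A) = (\<Sum>x\<in>A. D n (g x))"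
  by (induction A rule: infinite_finite_induct) (simp_all add: D_zero D_add)
lemma d_zero: "d 0 = 0" using d_scale[of 0 0] by simp
lemma d_minus: "d (- x) = - d x" using d_scale[of "-1" x] by simp
lemma d_diff: "d (x - y) = d x - d y" using d_add[of x "-y"] by (simp add: d_minus)
lemma d_sum: "d (sum g A) = (\<Sum>x\<in>A. d (g x))"
  by (induction A rule: infinite_finite_induct) (simp_all add: d_zero d_add)
lemma p_zero: "p 0 = 0" using p_scale[of 0 0] by simp
lemma p_minus: "p (- x) = - p x" using p_scale[of "-1" x] by simp
lemma p_diff: "p (x - y) = p x - p y" using p_add[of x "-y"] by (simp add: p_minus)

lemma J_left: "x * (J * y) = J * (x * y)"
  by (metis J_central mult.assoc)

lemma anti_ab:
  fixes G :: "'g \<Rightarrow> 'g \<Rightarrow> 'g \<Rightarrow> 'A"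
  assumes "\<And>a b c. G b a c = G a b c"
  shows "(\<Sum>a\<in>UNIV. \<Sum>b\<in>UNIV. \<Sum>c\<in>UNIV. f a b c *\<^sub>R G a b c) = 0"
proof -
  let ?S = "(\<Sum>a\<in>UNIV. \<Sum>b\<in>UNIV. \<Sum>c\<in>UNIV. f a b c *\<^sub>R G a b c)"
  have 1: "?S = (\<Sum>a\<in>UNIV. \<Sum>b\<in>UNIV. \<Sum>c\<in>UNIV. f b a c *\<^sub>R G b a c)" by (rule sum.swap)
  have 2: "(\<Sum>a\<in>UNIV. \<Sum>b\<in>UNIV. \<Sum>c\<in>UNIV. f b a c *\<^sub>R G b a c) = (\<Sum>a\<in>UNIV. \<Sum>b\<in>UNIV. \<Sum>c\<in>UNIV. - (f a b c *\<^sub>R G a b c))"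
    by (intro sum.cong refl) (metis f_anti12 assms scaleR_minus_left)
  have "?S = - ?S" by (rule trans[OF trans[OF 1 2]], simp only: sum_negf)
  then show ?thesis by (rule self_neg_zero)
qed

lemma anti_bc:
  fixes G :: "'g \<Rightarrow> 'g \<Rightarrow> 'g \<Rightarrow> 'A"
  assumes "\<And>a b c. G a c b = G a b c"
  shows "(\<Sum>a\<in>UNIV. \<Sum>b\<in>UNIV. \<Sum>c\<in>UNIV. f a b c *\<^sub>R G a b c) = 0"
proof -
  let ?S = "(\<Sum>a\<in>UNIV. \<Sum>b\<in>UNIV. \<Sum>c\<in>UNIV. f a b c *\<^sub>R G a b c)"
  have 1: "?S = (\<Sum>a\<in>UNIV. \<Sum>b\<in>UNIV. \<Sum>c\<in>UNIV. f a c b *\<^sub>R G a c b)"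
    by (rule sum.cong[OF refl], rule sum.swap)
  have 2: "(\<Sum>a\<in>UNIV. \<Sum>b\<in>UNIV. \<Sum>c\<in>UNIV. f a c b *\<^sub>R G a c b) = (\<Sum>a\<in>UNIV. \<Sum>b\<in>UNIV. \<Sum>c\<in>UNIV. - (f a b c *\<^sub>R G a b c))"
    by (intro sum.cong refl) (metis f_anti23 assms scaleR_minus_left)
  have "?S = - ?S" by (rule trans[OF trans[OF 1 2]], simp only: sum_negf)
  then show ?thesis by (rule self_neg_zero)
qed


lemma swap3: "(\<Sum>m\<in>M. \<Sum>a\<in>A. \<Sum>b\<in>B. \<Sum>c\<in>C. h a b c m) = (\<Sum>a\<in>A. \<Sum>b\<in>B. \<Sum>c\<in>C. \<Sum>m\<in>M. (h a b c m :: 'A))"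
proof -
  have "(\<Sum>m\<in>M. \<Sum>a\<in>A. \<Sum>b\<in>B. \<Sum>c\<in>C. h a b c m) = (\<Sum>a\<in>A. \<Sum>m\<in>M. \<Sum>b\<in>B. \<Sum>c\<in>C. h a b c m)"
    by (rule sum.swap)
  also have "\<dots> = (\<Sum>a\<in>A. \<Sum>b\<in>B. \<Sum>m\<in>M. \<Sum>c\<in>C. h a b c m)"
    by (rule sum.cong[OF refl], rule sum.swap)
  also have "\<dots> = (\<Sum>a\<in>A. \<Sum>b\<in>B. \<Sum>c\<in>C. \<Sum>m\<in>M. h a b c m)"
    by (rule sum.cong[OF refl], rule sum.cong[OF refl], rule sum.swap)
  finally show ?thesis .
qed

lemma red: "d (\<Sum>a\<in>UNIV. \<Sum>b\<in>UNIV. \<Sum>c\<in>UNIV. f a b c *\<^sub>R P a b c)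
   - J * (\<Sum>m<4. D m (\<Sum>a\<in>UNIV. \<Sum>b\<in>UNIV. \<Sum>c\<in>UNIV. f a b c *\<^sub>R Q a b c m))
   = (\<Sum>a\<in>UNIV. \<Sum>b\<in>UNIV. \<Sum>c\<in>UNIV. f a b c *\<^sub>R (d (P a b c) - J * (\<Sum>m<4. D m (Q a b c m))))"
proof -
  have 1: "J * (\<Sum>m<4. D m (\<Sum>a\<in>UNIV. \<Sum>b\<in>UNIV. \<Sum>c\<in>UNIV. f a b c *\<^sub>R Q a b c m))
     = (\<Sum>m<4. \<Sum>a\<in>UNIV. \<Sum>b\<in>UNIV. \<Sum>c\<in>UNIV. f a b c *\<^sub>R (J * D m (Q a b c m)))"
    by (simp only: D_sum D_scale sum_distrib_left mult_scaleR_right)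
  show ?thesis
    unfolding 1 apply (subst swap3)
    by (simp only: d_sum d_scale sum_subtractf scaleR_diff_right scaleR_sum_right sum_distrib_left)
qed

end


lemma double_eq: "(2::real) *\<^sub>R x = 2 *\<^sub>R y \<Longrightarrow> x = (y::'a::real_vector)"
  by simp

context ym begin

lemmas ex = Fstr_def Kop_def sum4 eta_simps D_add D_scale D_mult D_J D_v D_u D_ut D_zero D_minus D_diff
  d_add d_scale d_mult d_J d_v d_u d_ut d_zero d_minus d_diff
  p_add p_scale p_mult p_J p_v p_u p_ut p_minus p_diff p_zero
  mult.assoc J_left distrib_left distrib_right left_diff_distrib right_diff_distrib
  scaleR_add_right scaleR_diff_right mult_scaleR_left mult_scaleR_right scaleR_scaleR shift_comm
  mult_minus_left mult_minus_right scaleR_minus_right scaleR_minus_left scaleR_one scaleR_zero_left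
  scaleR_zero_right mult_zero_left mult_zero_right add_0_left add_0_right diff_0 diff_0_right minus_minus

lemma vmem: "v a n x \<in> range (\<lambda>(a, \<mu>, \<alpha>). v a \<mu> \<alpha>)"
  by (rule range_eqI[of _ _ "(a, n, x)"]) simp
lemma umem: "u a x \<in> range (\<lambda>(a, \<alpha>). u a \<alpha>)"
  by (rule range_eqI[of _ _ "(a, x)"]) simp

lemma uu: "u a x * u b y = - (u b y * u a x)"
  by (rule anticomm_odd) (simp_all add: vmem umem)
lemma uu': "u a x * (u b y * z) = - (u b y * (u a x * z))"
  by (simp add: mult.assoc[symmetric] uu[of a x b y])
lemma uv: "u a x * v b m y = v b m y * u a x"
  by (rule comm_even[symmetric]) (simp_all add: vmem umem)
lemma uv': "u a x * (v b m y * z) = v b m y * (u a x * z)"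
  by (simp add: mult.assoc[symmetric] uv)
lemma vv: "v a n x * v b m y = v b m y * v a n x"
  by (rule comm_even) (simp_all add: vmem umem)
lemma vv': "v a n x * (v b m y * z) = v b m y * (v a n x * z)"
  by (simp add: mult.assoc[symmetric] vv[of a n x b m y])

definition "X1 a b c \<mu> = (\<Sum>\<nu><4. eta \<nu> *\<^sub>R (u a noder * v b \<nu> noder * Fstr D v c \<nu> \<mu>))
               - (1/2) *\<^sub>R (u a noder * u b noder * (eta \<mu> *\<^sub>R D \<mu> (ut c noder)))"
definition "X2 a b c \<mu> \<nu> = (1/2) *\<^sub>R (u a noder * u b noder * Fstr D v c \<mu> \<nu>)"
definition "R1 a b c \<mu> = (1/2) *\<^sub>R (u a noder * u b noder * Kop D (v c \<mu> noder))"
definition "G1 a b c \<mu> = - (J * (\<Sum>\<nu><4. u a noder * u b (shift \<nu> noder) * Fstr D v c \<nu> \<mu>))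
     - J * ((1/2) *\<^sub>R (\<Sum>\<nu><4. (u a (shift \<nu> noder) * u b noder + u a noder * u b (shift \<nu> noder)) * Fstr D v c \<mu> \<nu>))"

lemma pt1: assumes "\<mu> < 4"
  shows "d (X1 a b c \<mu>) - J * (\<Sum>\<nu><4. D \<nu> (X2 a b c \<mu> \<nu>)) = G1 a b c \<mu> + J * R1 a b c \<mu>"
proof -
  have "\<mu> = 0 \<or> \<mu> = 1 \<or> \<mu> = 2 \<or> \<mu> = 3" using assms by auto
  then show ?thesis
    unfolding X1_def X2_def R1_def G1_def
    apply (elim disjE)
    apply (rule double_eq, simp only: ex, simp add: scaleR_2)+
    done
qed

lemma sym1: assumes "\<mu> < 4" shows "G1 b a c \<mu> = G1 a b c \<mu>"
proof -
  have r1: "u b x * u a y = - (u a y * u b x)" for x y by (rule uu)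
  have r2: "u b x * (u a y * z) = - (u a y * (u b x * z))" for x y z by (rule uu')
  have "\<mu> = 0 \<or> \<mu> = 1 \<or> \<mu> = 2 \<or> \<mu> = 3" using assms by auto
  then show ?thesis
    unfolding G1_def
    apply (elim disjE)
    apply (rule double_eq, simp only: ex r1 r2, simp add: scaleR_2)+
    done
qed


definition "X0 a b c = (1/2) *\<^sub>R (\<Sum>\<mu><4. \<Sum>\<nu><4. (eta \<mu> * eta \<nu>) *\<^sub>R
                    (v a \<mu> noder * v b \<nu> noder * Fstr D v c \<nu> \<mu>))
               + (\<Sum>\<mu><4. u a noder * v b \<mu> noder * D \<mu> (ut c noder))"
definition "R0 a b c = (\<Sum>\<mu><4. u a noder * v b \<mu> noder * Kop D (eta \<mu> *\<^sub>R v c \<mu> noder))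
               + (1/2) *\<^sub>R (u a noder * u b noder * Kop D (ut c noder))"
definition "G0 a b c = J * ((1/2) *\<^sub>R (\<Sum>\<mu><4. \<Sum>\<nu><4.
       eta \<mu> *\<^sub>R (v a \<mu> noder * u b (shift \<nu> noder) * Fstr D v c \<nu> \<mu>)
     - eta \<nu> *\<^sub>R (u a (shift \<mu> noder) * v b \<nu> noder * Fstr D v c \<nu> \<mu>))
   + (1/2) *\<^sub>R (\<Sum>\<mu><4. eta \<mu> *\<^sub>R ((u a (shift \<mu> noder) * u b noder - u a noder * u b (shift \<mu> noder)) * ut c (shift \<mu> noder))))"
definition "H0 a b c = - (J * (\<Sum>\<mu><4. \<Sum>\<nu><4.
       u a noder * v b \<nu> (shift \<mu> noder) * v c \<mu> (shift \<nu> noder)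
     - (eta \<nu> * eta \<mu>) *\<^sub>R (u a noder * v b \<nu> (shift \<mu> noder) * v c \<nu> (shift \<mu> noder))))"

lemma pt0: "d (X0 a b c) - J * (\<Sum>\<mu><4. D \<mu> (X1 a b c \<mu>)) = G0 a b c + H0 a b c + J * R0 a b c"
  unfolding X0_def X1_def R0_def G0_def H0_def
  by (rule double_eq, simp only: ex, simp add: scaleR_2)

lemma sym0a: "G0 b a c = G0 a b c"
proof -
  have r1: "u b x * u a y = - (u a y * u b x)" for x y by (rule uu)
  have r2: "u b x * (u a y * z) = - (u a y * (u b x * z))" for x y z by (rule uu')
  show ?thesis unfolding G0_def
    by (rule double_eq, simp only: ex r1 r2 uv uv', simp add: scaleR_2)
qed

lemma sym0b: "H0 a c b = H0 a b c"
proof -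
  have r1: "v c n x * v b m y = v b m y * v c n x" for n m x y by (rule vv)
  have r2: "v c n x * (v b m y * z) = v b m y * (v c n x * z)" for n m x y z by (rule vv')
  show ?thesis unfolding H0_def
    by (rule double_eq, simp only: ex r1 r2, simp add: scaleR_2)
qed


lemma Tym0: "Tym f D v u ut [] = (\<Sum>a\<in>UNIV. \<Sum>b\<in>UNIV. \<Sum>c\<in>UNIV. f a b c *\<^sub>R X0 a b c)"
  by (simp add: Tym_def X0_def)
lemma Tym1: "Tym f D v u ut [\<mu>] = (\<Sum>a\<in>UNIV. \<Sum>b\<in>UNIV. \<Sum>c\<in>UNIV. f a b c *\<^sub>R X1 a b c \<mu>)"
  by (simp add: Tym_def X1_def)
lemma Tym2: "Tym f D v u ut [\<mu>, \<nu>] = (\<Sum>a\<in>UNIV. \<Sum>b\<in>UNIV. \<Sum>c\<in>UNIV. f a b c *\<^sub>R X2 a b c \<mu> \<nu>)"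
  by (simp add: Tym_def X2_def)
lemma Tym3: "2 < length I \<Longrightarrow> Tym f D v u ut I = 0"
  by (cases I rule: remdups_adj.cases) (auto simp: Tym_def split: list.split)

lemma sum3_add: "(\<Sum>a\<in>UNIV. \<Sum>b\<in>UNIV. \<Sum>c\<in>UNIV. f a b c *\<^sub>R (P a b c + Q a b c)) =
   (\<Sum>a\<in>UNIV. \<Sum>b\<in>UNIV. \<Sum>c\<in>UNIV. f a b c *\<^sub>R P a b c) + (\<Sum>a\<in>UNIV. \<Sum>b\<in>UNIV. \<Sum>c\<in>UNIV. f a b c *\<^sub>R (Q a b c :: 'A))"
  by (simp add: scaleR_add_right sum.distrib)
lemma sum3_J: "(\<Sum>a\<in>UNIV. \<Sum>b\<in>UNIV. \<Sum>c\<in>UNIV. f a b c *\<^sub>R (J * P a b c)) =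
   J * (\<Sum>a\<in>UNIV. \<Sum>b\<in>UNIV. \<Sum>c\<in>UNIV. f a b c *\<^sub>R P a b c)"
  by (simp add: sum_distrib_left mult_scaleR_right)

lemma main0: "Sym f J D d v u ut [] = J * (\<Sum>a\<in>UNIV. \<Sum>b\<in>UNIV. \<Sum>c\<in>UNIV. f a b c *\<^sub>R R0 a b c)"
proof -
  have "Sym f J D d v u ut [] = (\<Sum>a\<in>UNIV. \<Sum>b\<in>UNIV. \<Sum>c\<in>UNIV. f a b c *\<^sub>R (d (X0 a b c) - J * (\<Sum>m<4. D m (X1 a b c m))))"
    unfolding Sym_def by (simp only: append.simps Tym0 Tym1 red)
  also have "\<dots> = (\<Sum>a\<in>UNIV. \<Sum>b\<in>UNIV. \<Sum>c\<in>UNIV. f a b c *\<^sub>R (G0 a b c + H0 a b c + J * R0 a b c))"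
    by (simp only: pt0)
  also have "\<dots> = J * (\<Sum>a\<in>UNIV. \<Sum>b\<in>UNIV. \<Sum>c\<in>UNIV. f a b c *\<^sub>R R0 a b c)"
    by (simp only: sum3_add sum3_J anti_ab[of G0, OF sym0a] anti_bc[of H0, OF sym0b] add_0_left)
  finally show ?thesis .
qed

lemma main1: assumes "\<mu> < 4" shows "Sym f J D d v u ut [\<mu>] = J * (\<Sum>a\<in>UNIV. \<Sum>b\<in>UNIV. \<Sum>c\<in>UNIV. f a b c *\<^sub>R R1 a b c \<mu>)"
proof -
  have "Sym f J D d v u ut [\<mu>] = (\<Sum>a\<in>UNIV. \<Sum>b\<in>UNIV. \<Sum>c\<in>UNIV. f a b c *\<^sub>R (d (X1 a b c \<mu>) - J * (\<Sum>m<4. D m (X2 a b c \<mu> m))))"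
    unfolding Sym_def by (simp only: append.simps Tym1 Tym2 red)
  also have "\<dots> = (\<Sum>a\<in>UNIV. \<Sum>b\<in>UNIV. \<Sum>c\<in>UNIV. f a b c *\<^sub>R (G1 a b c \<mu> + J * R1 a b c \<mu>))"
    by (simp only: pt1[OF assms])
  also have "\<dots> = J * (\<Sum>a\<in>UNIV. \<Sum>b\<in>UNIV. \<Sum>c\<in>UNIV. f a b c *\<^sub>R R1 a b c \<mu>)"
    by (simp only: sum3_add sum3_J anti_ab[of "\<lambda>a b c. G1 a b c \<mu>", OF sym1[OF assms]] add_0_left)
  finally show ?thesis .
qed

lemma dX2: "d (X2 a b c m n) = 0"
  unfolding X2_def by (simp only: ex, simp)

lemma main2: assumes "1 < length I" shows "Sym f J D d v u ut I = 0"
proof (cases "length I = 2")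
  case True
  then obtain m n where I: "I = [m, n]"
    by (cases I rule: remdups_adj.cases) auto
  have "Sym f J D d v u ut I = d (\<Sum>a\<in>UNIV. \<Sum>b\<in>UNIV. \<Sum>c\<in>UNIV. f a b c *\<^sub>R X2 a b c m n)"
    unfolding Sym_def I by (simp add: Tym2 Tym3 D_zero)
  also have "\<dots> = 0" by (simp add: d_sum d_scale dX2)
  finally show ?thesis .
next
  case False
  then show ?thesis using assms unfolding Sym_def by (simp add: Tym3 D_zero d_zero)
qed

lemma main: "(Sym f J D d v u ut [] =
           J * (\<Sum>a\<in>UNIV. \<Sum>b\<in>UNIV. \<Sum>c\<in>UNIV. f a b c *\<^sub>R
              ((\<Sum>\<mu><4. u a noder * v b \<mu> noder * Kop D (eta \<mu> *\<^sub>R v c \<mu> noder))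
               + (1/2) *\<^sub>R (u a noder * u b noder * Kop D (ut c noder)))))
         \<and> (\<forall>\<mu><4. Sym f J D d v u ut [\<mu>] =
           J * (\<Sum>a\<in>UNIV. \<Sum>b\<in>UNIV. \<Sum>c\<in>UNIV. f a b c *\<^sub>R
              ((1/2) *\<^sub>R (u a noder * u b noder * Kop D (v c \<mu> noder)))))
         \<and> (\<forall>I. 1 < length I \<longrightarrow> set I \<subseteq> {..<4} \<longrightarrow> Sym f J D d v u ut I = 0)"
  using main0 main1 main2 unfolding R0_def R1_def by blast

end
theorem mainTheorem2:
  fixes f :: "'g::finite \<Rightarrow> 'g \<Rightarrow> 'g \<Rightarrow> real"
    and J :: "'A::real_algebra_1"
    and D :: "nat \<Rightarrow> 'A \<Rightarrow> 'A" and d p :: "'A \<Rightarrow> 'A"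
    and v :: "'g \<Rightarrow> nat \<Rightarrow> (nat \<Rightarrow> nat) \<Rightarrow> 'A"
    and u ut :: "'g \<Rightarrow> (nat \<Rightarrow> nat) \<Rightarrow> 'A"
  assumes f_anti12: "\<And>a b c. f b a c = - f a b c"
    and f_anti23: "\<And>a b c. f a c b = - f a b c"
    and J_sq: "J * J = - 1"
    and J_central: "\<And>x. J * x = x * J"
    and comm_even: "\<And>x y. x \<in> range (\<lambda>(a, \<mu>, \<alpha>). v a \<mu> \<alpha>) \<Longrightarrow>
        y \<in> range (\<lambda>(a, \<mu>, \<alpha>). v a \<mu> \<alpha>) \<union> range (\<lambda>(a, \<alpha>). u a \<alpha>) \<union> range (\<lambda>(a, \<alpha>). ut a \<alpha>) \<Longrightarrow>
        x * y = y * x"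
    and anticomm_odd: "\<And>x y. x \<in> range (\<lambda>(a, \<alpha>). u a \<alpha>) \<union> range (\<lambda>(a, \<alpha>). ut a \<alpha>) \<Longrightarrow>
        y \<in> range (\<lambda>(a, \<alpha>). u a \<alpha>) \<union> range (\<lambda>(a, \<alpha>). ut a \<alpha>) \<Longrightarrow>
        x * y = - (y * x)"
    and D_add: "\<And>\<nu> x y. D \<nu> (x + y) = D \<nu> x + D \<nu> y"
    and D_scale: "\<And>\<nu> r x. D \<nu> (r *\<^sub>R x) = r *\<^sub>R D \<nu> x"
    and D_mult: "\<And>\<nu> x y. D \<nu> (x * y) = D \<nu> x * y + x * D \<nu> y"
    and D_J: "\<And>\<nu>. D \<nu> J = 0"
    and D_v: "\<And>\<nu> a \<mu> \<alpha>. D \<nu> (v a \<mu> \<alpha>) = v a \<mu> (shift \<nu> \<alpha>)"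
    and D_u: "\<And>\<nu> a \<alpha>. D \<nu> (u a \<alpha>) = u a (shift \<nu> \<alpha>)"
    and D_ut: "\<And>\<nu> a \<alpha>. D \<nu> (ut a \<alpha>) = ut a (shift \<nu> \<alpha>)"
    and p_add: "\<And>x y. p (x + y) = p x + p y"
    and p_scale: "\<And>r x. p (r *\<^sub>R x) = r *\<^sub>R p x"
    and p_mult: "\<And>x y. p (x * y) = p x * p y"
    and p_one: "p 1 = 1"
    and p_J: "p J = J"
    and p_v: "\<And>a \<mu> \<alpha>. p (v a \<mu> \<alpha>) = v a \<mu> \<alpha>"
    and p_u: "\<And>a \<alpha>. p (u a \<alpha>) = - u a \<alpha>"
    and p_ut: "\<And>a \<alpha>. p (ut a \<alpha>) = - ut a \<alpha>"
    and d_add: "\<And>x y. d (x + y) = d x + d y"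
    and d_scale: "\<And>r x. d (r *\<^sub>R x) = r *\<^sub>R d x"
    and d_mult: "\<And>x y. d (x * y) = d x * y + p x * d y"
    and d_J: "d J = 0"
    and d_v: "\<And>a \<mu> \<alpha>. d (v a \<mu> \<alpha>) = J * (eta \<mu> *\<^sub>R u a (shift \<mu> \<alpha>))"
    and d_u: "\<And>a \<alpha>. d (u a \<alpha>) = 0"
    and d_ut: "\<And>a \<alpha>. d (ut a \<alpha>) = - (J * (\<Sum>\<mu><4. v a \<mu> (shift \<mu> \<alpha>)))"
  shows "(Sym f J D d v u ut [] =
           J * (\<Sum>a\<in>UNIV. \<Sum>b\<in>UNIV. \<Sum>c\<in>UNIV. f a b c *\<^sub>R
              ((\<Sum>\<mu><4. u a noder * v b \<mu> noder * Kop D (eta \<mu> *\<^sub>R v c \<mu> noder))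
               + (1/2) *\<^sub>R (u a noder * u b noder * Kop D (ut c noder)))))
         \<and> (\<forall>\<mu><4. Sym f J D d v u ut [\<mu>] =
           J * (\<Sum>a\<in>UNIV. \<Sum>b\<in>UNIV. \<Sum>c\<in>UNIV. f a b c *\<^sub>R
              ((1/2) *\<^sub>R (u a noder * u b noder * Kop D (v c \<mu> noder)))))
         \<and> (\<forall>I. 1 < length I \<longrightarrow> set I \<subseteq> {..<4} \<longrightarrow> Sym f J D d v u ut I = 0)"
  proof -
  have "ym f J D d p v u ut"
    by (rule ym.intro) (rule assms; assumption)+
  then show ?thesis by (rule ym.main)
qed

end
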